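(* For $b\ge 0$ let $a_b$ be the total number of cards for $b$ balls (so $a_0=1$, $a_1=2$, $a_2=7$). Then for all $b\ge 3$, \[ a_b=4a_{b-1}-2a_{b-2}. \]
   Context: For an integer $b\ge 0$, an ordered partition of $b$ is a finite sequence $(q_1,\ldots,q_k)$ of positive integers summing to $b$ (for $b=0$ the only one is the empty sequence). An ordered partition $(q_1,\ldots,q_k)$ with $k\ge1$ is nontrivially embedded into an ordered partition $(r_1,\ldots,r_\ell)$ by a choice of indices $1\le i_2<i_3<\cdots<i_k\le \ell$ with $q_j\le r_{i_j}$ for $2\le j\le k$; different index tuples count as different embeddings. A card for $b$ balls is either (i) a trivial card, given by an ordered partition $q$ of $b$, whose left and right partitions are both $q$; or (ii) a throw card, given by ordered partitions $q=(q_1,\ldots,q_k)$ ($k\ge1$) and $r=(r_1,\ldots,r_\ell)$ of $b$ together with a nontrivial embedding $(i_2,\ldots,i_k)$ of $q$ into $r$; its left partition is $q$ and its right partition is $r$. Different index tuples give different cards, and a throw card is distinct from the trivial card even when $q=r$. *)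

theory Defs
  imports Main
begin

definition ordered_partitions :: "nat \<Rightarrow> nat list set" where
  "ordered_partitions b = {q. (\<forall>x\<in>set q. 0 < x) \<and> sum_list q = b}"

text \<open>Nontrivial embeddings of q = (q_1..q_k), k \<ge> 1, into r: index lists
  [i_2,...,i_k] (0-based positions into r), strictly increasing, with
  q_j \<le> r_{i_j} for 2 \<le> j \<le> k.\<close>
definition nontrivial_embeddings :: "nat list \<Rightarrow> nat list \<Rightarrow> nat list set" where
  "nontrivial_embeddings q r =
     {is. q \<noteq> [] \<and> length is = length q - 1 \<and> sorted_wrt (<) is \<and>
          (\<forall>i\<in>set is. i < length r) \<and>
          (\<forall>j<length is. q ! Suc j \<le> r ! (is ! j))}"

text \<open>Cards for b balls: trivial cards (Inl q) and throw cards (Inr (q, r, embedding)).\<close>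
definition cards :: "nat \<Rightarrow> (nat list + (nat list \<times> nat list \<times> nat list)) set" where
  "cards b = Inl ` ordered_partitions b \<union>
     Inr ` {(q, r, is). q \<in> ordered_partitions b \<and> r \<in> ordered_partitions b \<and>
                        is \<in> nontrivial_embeddings q r}"

definition num_cards :: "nat \<Rightarrow> nat" where
  "num_cards b = card (cards b)"

end

theory Submission
  imports Defs
begin

fun E :: "nat list \<Rightarrow> nat list \<Rightarrow> nat" where
  "E q [] = (if q = [] then 1 else 0)"
| "E q (y#r) = (if q \<noteq> [] \<and> hd q \<le> y then E (tl q) r else 0) + E q r"

definition NE' :: "nat list \<Rightarrow> nat list \<Rightarrow> nat list set" where
  "NE' q r = {is. length is = length q \<and> sorted_wrt (<) is \<and>
          (\<forall>i\<in>set is. i < length r) \<and> (\<forall>j<length is. q ! j \<le> r ! (is ! j))}"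

lemma L1: "map Suc js \<in> NE' q (y#r) \<longleftrightarrow> js \<in> NE' q r"
  by (simp add: NE'_def sorted_wrt_map)

lemma L2: "0 # map Suc js \<in> NE' (x#q) (y#r) \<longleftrightarrow> x \<le> y \<and> js \<in> NE' q r"
  by (auto simp add: NE'_def sorted_wrt_map All_less_Suc2)

lemma NE'_nil: "NE' q [] = (if q = [] then {[]} else {})"
  by (auto simp: NE'_def)

lemma map_pred: "\<forall>k\<in>set xs. 0 < k \<Longrightarrow> map Suc (map (\<lambda>k. k - 1) xs) = xs"
  by (induct xs) auto

lemma NE'_cons: "NE' q (y#r) =
   (if q \<noteq> [] \<and> hd q \<le> y then (\<lambda>is. 0 # map Suc is) ` NE' (tl q) r else {})
   \<union> map Suc ` NE' q r" (is "?L = ?A \<union> ?B")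
proof
  show "?A \<union> ?B \<subseteq> ?L"
  proof
    fix x assume "x \<in> ?A \<union> ?B"
    then show "x \<in> ?L"
    proof
      assume "x \<in> ?A"
      then obtain a q' js where "q = a#q'" "a \<le> y" "js \<in> NE' q' r" "x = 0 # map Suc js"
        by (cases q) (auto split: if_splits)
      then show ?thesis using L2 by simp
    next
      assume "x \<in> ?B" then show ?thesis using L1 by auto
    qed
  qed
next
  show "?L \<subseteq> ?A \<union> ?B"
  proof
    fix xs assume xs: "xs \<in> ?L"
    show "xs \<in> ?A \<union> ?B"
    proof (cases xs)
      case Nil
      then have "q = []" using xs by (simp add: NE'_def)
      then show ?thesis using xs Nil L1[of "[]" q y r] by auto
    next
      case (Cons i is')
      have pos: "\<forall>k\<in>set is'. 0 < k" using xs Cons by (auto simp: NE'_def)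
      show ?thesis
      proof (cases "i = 0")
        case True
        obtain a q' where q: "q = a#q'" using xs Cons by (cases q) (auto simp: NE'_def)
        define js where "js = map (\<lambda>k. k - 1) is'"
        have e: "xs = 0 # map Suc js" using Cons True map_pred[OF pos] js_def by simp
        have "a \<le> y \<and> js \<in> NE' q' r" using L2 xs e q by metis
        then have "xs \<in> ?A" using e q by simp
        then show ?thesis by blast
      next
        case False
        have pos2: "\<forall>k\<in>set xs. 0 < k" using pos Cons False by auto
        have e: "xs = map Suc (map (\<lambda>k. k - 1) xs)" using map_pred[OF pos2] by simp
        have "map (\<lambda>k. k - 1) xs \<in> NE' q r" using L1 xs e by metis
        then show ?thesis using e by blast
      qed
    qed
  qed
qed

lemma NE'_card: "finite (NE' q r) \<and> card (NE' q r) = E q r"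
proof (induct r arbitrary: q)
  case Nil then show ?case by (simp add: NE'_nil)
next
  case (Cons y r)
  have inj1: "inj (\<lambda>is::nat list. 0 # map Suc is)" by (auto simp: inj_def)
  have inj2: "inj (map Suc)" by (rule inj_mapI) simp
  let ?A = "(if q \<noteq> [] \<and> hd q \<le> y then (\<lambda>is. 0 # map Suc is) ` NE' (tl q) r else {})"
  let ?B = "map Suc ` NE' q r"
  have fA: "finite ?A" and fB: "finite ?B" using Cons by auto
  have d: "?A \<inter> ?B = {}" by auto
  have cA: "card ?A = (if q \<noteq> [] \<and> hd q \<le> y then E (tl q) r else 0)"
    using Cons card_image[OF inj_on_subset[OF inj1]] by auto
  have cB: "card ?B = E q r"
    using Cons card_image[OF inj_on_subset[OF inj2]] by auto
  show ?case using fA fB d cA cB card_Un_disjoint[OF fA fB d] by (simp add: NE'_cons)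
qed

definition Q :: "nat \<Rightarrow> nat list set" where
  "Q m = {q. (\<forall>x\<in>set q. 0 < x) \<and> sum_list q \<le> m}"

lemma len_le_sum: "\<forall>x\<in>set q. 0 < (x::nat) \<Longrightarrow> length q \<le> sum_list q"
  by (induct q) auto

lemma finite_Q: "finite (Q m)"
proof -
  have "Q m \<subseteq> {xs. set xs \<subseteq> {..m} \<and> length xs \<le> m}"
    using len_le_sum member_le_sum_list by (fastforce simp: Q_def)
  then show ?thesis using finite_subset finite_lists_length_le by blast
qed

lemma OP_Q: "ordered_partitions m \<subseteq> Q m"
  by (auto simp: Q_def ordered_partitions_def)

lemma finite_OP: "finite (ordered_partitions m)"
  using OP_Q finite_Q finite_subset by blast

lemma E_zero: "E q r \<noteq> 0 \<Longrightarrow> sum_list q \<le> sum_list r"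
proof (induct r arbitrary: q)
  case Nil then show ?case by (simp split: if_splits)
next
  case (Cons y r)
  show ?case
  proof (cases "q \<noteq> [] \<and> hd q \<le> y \<and> E (tl q) r \<noteq> 0")
    case True
    then obtain a q' where "q = a#q'" by (cases q) auto
    then show ?thesis using True Cons(1)[of q'] by auto
  next
    case False
    then have "E q r \<noteq> 0" using Cons(2) by (auto split: if_splits)
    then show ?thesis using Cons(1) by fastforce
  qed
qed

lemma E_diag: "\<forall>x\<in>set r. 0 < x \<Longrightarrow> sum_list q = sum_list r \<Longrightarrow> E q r = (if q = r then 1 else 0)"
proof (induct r arbitrary: q)
  case Nil then show ?case by simp
next
  case (Cons y r)
  have z: "E q r = 0" using E_zero[of q r] Cons by fastforce
  show ?case
  proof (cases "q = []")
    case True then show ?thesis using z by simp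
  next
    case False
    then obtain a q' where Cons2: "q = a#q'" by (cases q) auto
    show ?thesis
    proof (cases "a = y")
      case True
      have "sum_list q' = sum_list r" using Cons.prems Cons2 True by simp
      moreover have "\<forall>x\<in>set r. 0 < x" using Cons.prems by simp
      ultimately have "E q' r = (if q' = r then 1 else 0)" by (rule Cons.hyps[of q', rotated])
      then have e1: "E q (y#r) = (if q' = r then 1 else 0)" using Cons2 z True by simp
      have "(q = y # r) = (q' = r)" using Cons2 True by simp
      then show ?thesis using e1 by simp
    next
      case False
      show ?thesis
      proof (cases "a < y")
        case True
        then have "E q' r = 0" using E_zero[of q' r] Cons Cons2 by fastforce
        then show ?thesis using z Cons2 \<open>a \<noteq> y\<close> by auto
      next
        case False
        then show ?thesis using z Cons2 \<open>a \<noteq> y\<close> by auto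
      qed
    qed
  qed
qed

lemma sum_cons_union:
  assumes "finite T" "\<forall>t\<in>T. finite (A t)" "inj_on h T"
  shows "sum f (\<Union>t\<in>T. (#) (h t) ` A t) = (\<Sum>t\<in>T. \<Sum>q\<in>A t. f (h t # q))"
proof -
  have "sum f (\<Union>t\<in>T. (#) (h t) ` A t) = (\<Sum>t\<in>T. sum f ((#) (h t) ` A t))"
    using assms by (intro sum.UNION_disjoint) (auto simp: inj_on_def)
  also have "\<dots> = (\<Sum>t\<in>T. \<Sum>q\<in>A t. f (h t # q))"
  proof (rule sum.cong[OF refl])
    fix t assume "t \<in> T"
    show "sum f ((#) (h t) ` A t) = (\<Sum>q\<in>A t. f (h t # q))"
      by (subst sum.reindex) (auto simp: inj_on_def)
  qed
  finally show ?thesis .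
qed

lemma Q_decomp: "Q m = insert [] (\<Union>t\<in>{1..m}. (#) t ` Q (m - t))"
proof -
  { fix q assume "q \<in> Q m" "q \<noteq> []"
    then obtain a q' where "q = a # q'" by (cases q) auto
    then have "q \<in> (\<Union>t\<in>{1..m}. (#) t ` Q (m - t))"
      using \<open>q \<in> Q m\<close> by (auto simp: Q_def image_iff intro!: bexI[where x=a]) }
  then show ?thesis by (auto simp: Q_def)
qed

lemma OP_decomp: "1 \<le> n \<Longrightarrow> ordered_partitions n = (\<Union>k\<in>{..<n}. (#) (n - k) ` ordered_partitions k)"
proof -
  assume n: "1 \<le> n"
  { fix q assume "q \<in> ordered_partitions n"
    then obtain a q' where "q = a # q'" using n by (cases q) (auto simp: ordered_partitions_def)
    then have "q \<in> (\<Union>k\<in>{..<n}. (#) (n - k) ` ordered_partitions k)"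
      using \<open>q \<in> ordered_partitions n\<close>
      by (auto simp: ordered_partitions_def image_iff intro!: bexI[where x="sum_list q'"]) }
  then show ?thesis by (auto simp: ordered_partitions_def)
qed

lemma sum_Q: "sum g (Q M) = g [] + (\<Sum>t\<in>{1..M}. \<Sum>q\<in>Q (M - t). g (t # q))"
proof -
  have "sum g (Q M) = g [] + sum g (\<Union>t\<in>{1..M}. (#) t ` Q (M - t))"
    by (subst Q_decomp, subst sum.insert) (auto simp: finite_Q)
  also have "sum g (\<Union>t\<in>{1..M}. (#) t ` Q (M - t)) = (\<Sum>t\<in>{1..M}. \<Sum>q\<in>Q (M - t). g (t # q))"
    using sum_cons_union[of "{1..M}" "\<lambda>t. Q (M - t)" id g] by (simp add: finite_Q)
  finally show ?thesis .
qed

definition G :: "nat list \<Rightarrow> nat" where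
  "G r = (\<Sum>q\<in>Q (sum_list r). E q r)"

lemma sum_restrict: assumes "n \<le> m" "sum_list p = n" shows "(\<Sum>q\<in>Q m. E q p) = (\<Sum>q\<in>Q n. E q p)"
proof -
  have "finite (Q m)" "Q n \<subseteq> Q m" "\<forall>q\<in>Q m - Q n. E q p = 0"
    using assms finite_Q E_zero by (fastforce simp: Q_def)+
  then show ?thesis by (rule sum.mono_neutral_right)
qed

lemma G_cons: "0 < s \<Longrightarrow> G (s # p) = (s + 1) * G p"
proof -
  assume s: "0 < s"
  let ?n = "sum_list p"
  have "G (s # p) = (\<Sum>q\<in>Q (s + ?n). (if q \<noteq> [] \<and> hd q \<le> s then E (tl q) p else 0))
      + (\<Sum>q\<in>Q (s + ?n). E q p)"
    by (simp add: G_def sum.distrib)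
  also have "(\<Sum>q\<in>Q (s + ?n). E q p) = G p"
    unfolding G_def by (rule sum_restrict) auto
  also have "(\<Sum>q\<in>Q (s + ?n). (if q \<noteq> [] \<and> hd q \<le> s then E (tl q) p else 0))
     = (\<Sum>t\<in>{1..s + ?n}. \<Sum>q\<in>Q (s + ?n - t). (if t \<le> s then E q p else 0))"
    by (subst sum_Q) (simp cong: if_cong)
  also have "\<dots> = (\<Sum>t\<in>{1..s + ?n}. (if t \<le> s then G p else 0))"
    by (intro sum.cong refl) (auto simp: G_def intro: sum_restrict)
  also have "\<dots> = (\<Sum>t\<in>{1..s}. G p)"
    by (rule sum.mono_neutral_cong_right) auto
  finally show ?thesis by simp
qed

definition V :: "nat \<Rightarrow> nat" where
  "V n = (\<Sum>r\<in>ordered_partitions n. G r)"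

lemma NE_eq: "nontrivial_embeddings q r = (if q = [] then {} else NE' (tl q) r)"
  by (cases q) (auto simp: nontrivial_embeddings_def NE'_def)

lemma OP_img: assumes "1 \<le> b" shows "ordered_partitions b = (\<lambda>q. (b - sum_list q) # q) ` Q (b - 1)"
proof
  show "(\<lambda>q. (b - sum_list q) # q) ` Q (b - 1) \<subseteq> ordered_partitions b"
    using assms by (auto simp: Q_def ordered_partitions_def)
next
  show "ordered_partitions b \<subseteq> (\<lambda>q. (b - sum_list q) # q) ` Q (b - 1)"
  proof
    fix q assume q: "q \<in> ordered_partitions b"
    then obtain a q' where "q = a # q'" using assms by (cases q) (auto simp: ordered_partitions_def)
    then show "q \<in> (\<lambda>q. (b - sum_list q) # q) ` Q (b - 1)"
      using q by (auto simp: Q_def ordered_partitions_def image_iff intro!: bexI[where x=q'])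
  qed
qed

lemma per_r:
  assumes b: "1 \<le> b" and r: "r \<in> ordered_partitions b"
  shows "1 + (\<Sum>q\<in>ordered_partitions b. if q = [] then 0 else E (tl q) r) = G r"
proof -
  have inj: "inj_on (\<lambda>q. (b - sum_list q) # q) (Q (b - 1))" by (auto simp: inj_on_def)
  have s1: "(\<Sum>q\<in>ordered_partitions b. if q = [] then 0 else E (tl q) r) = (\<Sum>q\<in>Q (b - 1). E q r)"
    by (subst OP_img[OF b], subst sum.reindex[OF inj]) simp
  have s2: "(\<Sum>q\<in>ordered_partitions b. E q r) = 1"
  proof -
    have "(\<Sum>q\<in>ordered_partitions b. E q r) = (\<Sum>q\<in>ordered_partitions b. if q = r then 1 else 0)"
      using r by (intro sum.cong refl E_diag) (auto simp: ordered_partitions_def)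
    then show ?thesis using r finite_OP by simp
  qed
  have u: "Q b = Q (b - 1) \<union> ordered_partitions b" using b by (auto simp: Q_def ordered_partitions_def)
  have d: "Q (b - 1) \<inter> ordered_partitions b = {}" using b by (auto simp: Q_def ordered_partitions_def)
  have "G r = (\<Sum>q\<in>Q b. E q r)" using r by (simp add: G_def ordered_partitions_def)
  also have "\<dots> = (\<Sum>q\<in>Q (b - 1). E q r) + (\<Sum>q\<in>ordered_partitions b. E q r)"
    unfolding u by (rule sum.union_disjoint[OF finite_Q finite_OP d])
  finally show ?thesis using s1 s2 by simp
qed

lemma num_cards_V: assumes "1 \<le> b" shows "num_cards b = V b"
proof -
  let ?O = "ordered_partitions b"
  let ?S = "SIGMA q:?O. SIGMA r:?O. nontrivial_embeddings q r"
  have fNE: "finite (nontrivial_embeddings q r)" for q r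
    using NE'_card by (simp add: NE_eq)
  have c: "cards b = Inl ` ?O \<union> Inr ` ?S" unfolding cards_def by auto
  have fS: "finite ?S" using finite_OP fNE by auto
  have "num_cards b = card (Inl ` ?O :: (nat list + (nat list \<times> nat list \<times> nat list)) set)
      + card (Inr ` ?S :: (nat list + (nat list \<times> nat list \<times> nat list)) set)"
    unfolding num_cards_def c
    by (subst card_Un_disjoint) (auto simp: finite_OP fS)
  also have "card (Inl ` ?O) = card ?O" by (rule card_image) simp
  also have "card (Inr ` ?S) = card ?S" by (rule card_image) simp
  also have "card ?S = (\<Sum>q\<in>?O. \<Sum>r\<in>?O. card (nontrivial_embeddings q r))"
    using finite_OP fNE by simp
  also have "\<dots> = (\<Sum>q\<in>?O. \<Sum>r\<in>?O. if q = [] then 0 else E (tl q) r)"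
    using NE'_card by (intro sum.cong refl) (simp add: NE_eq)
  also have "\<dots> = (\<Sum>r\<in>?O. \<Sum>q\<in>?O. if q = [] then 0 else E (tl q) r)"
    by (rule sum.swap)
  also have "card ?O + \<dots> = (\<Sum>r\<in>?O. 1 + (\<Sum>q\<in>?O. if q = [] then 0 else E (tl q) r))"
    unfolding card_eq_sum by (rule sum.distrib[symmetric])
  also have "\<dots> = V b" unfolding V_def using per_r[OF assms] by (intro sum.cong refl) auto
  finally show ?thesis .
qed

lemma V_rec: assumes "1 \<le> n" shows "V n = (\<Sum>k<n. (n - k + 1) * V k)"
proof -
  have "V n = (\<Sum>k<n. \<Sum>p\<in>ordered_partitions k. G ((n - k) # p))"
    unfolding V_def
    by (subst OP_decomp[OF assms], rule sum_cons_union) (auto simp: finite_OP inj_on_def)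
  also have "\<dots> = (\<Sum>k<n. (n - k + 1) * V k)"
    by (intro sum.cong refl) (simp add: V_def G_cons sum_distrib_left)
  finally show ?thesis .
qed

lemma V_step: assumes "1 \<le> n" shows "V (Suc n) = 3 * V n + (\<Sum>k<n. V k)"
proof -
  have a: "V (Suc n) = (\<Sum>k<Suc n. (Suc n - k + 1) * V k)" by (rule V_rec) simp
  have b: "(\<Sum>k<Suc n. (Suc n - k + 1) * V k) = (\<Sum>k<n. (Suc n - k + 1) * V k) + 2 * V n" by simp
  have c: "(\<Sum>k<n. (Suc n - k + 1) * V k) = (\<Sum>k<n. (n - k + 1) * V k + V k)"
    by (intro sum.cong refl) (simp add: Suc_diff_le)
  have d: "(\<Sum>k<n. (n - k + 1) * V k + V k) = V n + (\<Sum>k<n. V k)"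
    by (simp only: sum.distrib V_rec[OF assms, symmetric])
  show ?thesis using a b c d by simp
qed

theorem theorem4:
  fixes b :: nat
  assumes "b \<ge> 3"
  shows "int (num_cards b) = 4 * int (num_cards (b - 1)) - 2 * int (num_cards (b - 2))"
proof -
  define n where "n = b - 2"
  have n: "b = n + 2" "1 \<le> n" using assms by (auto simp: n_def)
  have "V (Suc (Suc n)) = 3 * V (Suc n) + (\<Sum>k<Suc n. V k)" by (rule V_step) simp
  also have "(\<Sum>k<Suc n. V k) = V n + (\<Sum>k<n. V k)" by simp
  finally have e1: "V (Suc (Suc n)) = 3 * V (Suc n) + V n + (\<Sum>k<n. V k)" by simp
  have e2: "V (Suc n) = 3 * V n + (\<Sum>k<n. V k)" by (rule V_step[OF n(2)])
  have "int (V (Suc (Suc n))) = 4 * int (V (Suc n)) - 2 * int (V n)"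
    using e1 e2 by simp
  moreover have "num_cards b = V (Suc (Suc n))" "num_cards (b - 1) = V (Suc n)" "num_cards (b - 2) = V n"
    using n num_cards_V by auto
  ultimately show ?thesis by simp
qed

end
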